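(* Let $\mathbb{Z}[s,u]$ be the polynomial ring in variables $s$ (of degree $4$) and $u$ (of degree $2$). Let $I_2=(3u^4-3su^2+s^2,\ u^6)$ and $J_2=(s^2+su^2+u^4,\ u^6)$. Then the graded rings $\mathbb{Z}[s,u]/I_2$ and $\mathbb{Z}[s,u]/J_2$ are isomorphic.
   Context: In the paper $s$ is written $y_1^2$ with $y_1$ of degree $2$. *)

theory Defs
  imports "HOL-Algebra.UnivPoly" "HOL-Algebra.QuotRing" "HOL-Algebra.IntRing"
begin

text \<open>The polynomial ring Z[s,u] is realised as (Z[s])[u]:
  Zs = Z[s], and ZSU = Zs[u].\<close>

abbreviation Zs where "Zs \<equiv> UP INTEG"
abbreviation ZSU where "ZSU \<equiv> UP Zs"

definition s_var :: "nat \<Rightarrow> nat \<Rightarrow> int" where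
  "s_var = monom ZSU (monom Zs 1 1) 0"

definition u_var :: "nat \<Rightarrow> nat \<Rightarrow> int" where
  "u_var = monom ZSU \<one>\<^bsub>Zs\<^esub> 1"

definition homogeneous :: "nat \<Rightarrow> (nat \<Rightarrow> nat \<Rightarrow> int) \<Rightarrow> bool" where
  "homogeneous d p \<longleftrightarrow> p \<in> carrier ZSU \<and>
     (\<forall>i j. coeff Zs (coeff ZSU p j) i \<noteq> 0 \<longrightarrow> 4 * i + 2 * j = d)"

definition quot_grade :: "(nat \<Rightarrow> nat \<Rightarrow> int) set \<Rightarrow> nat \<Rightarrow> (nat \<Rightarrow> nat \<Rightarrow> int) set set" where
  "quot_grade I d = (\<lambda>p. a_r_coset ZSU I p) ` {p. homogeneous d p}"

definition graded_quot_iso ::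
  "(nat \<Rightarrow> nat \<Rightarrow> int) set \<Rightarrow> (nat \<Rightarrow> nat \<Rightarrow> int) set \<Rightarrow> bool" where
  "graded_quot_iso I J \<longleftrightarrow>
     (\<exists>h \<in> ring_iso (ZSU Quot I) (ZSU Quot J).
        \<forall>d. h ` quot_grade I d = quot_grade J d)"

definition I2 :: "(nat \<Rightarrow> nat \<Rightarrow> int) set" where
  "I2 = genideal ZSU
     { (u_var [^]\<^bsub>ZSU\<^esub> (4::nat) \<oplus>\<^bsub>ZSU\<^esub> u_var [^]\<^bsub>ZSU\<^esub> (4::nat) \<oplus>\<^bsub>ZSU\<^esub> u_var [^]\<^bsub>ZSU\<^esub> (4::nat))
        \<ominus>\<^bsub>ZSU\<^esub> (s_var \<otimes>\<^bsub>ZSU\<^esub> u_var [^]\<^bsub>ZSU\<^esub> (2::nat) \<oplus>\<^bsub>ZSU\<^esub> s_var \<otimes>\<^bsub>ZSU\<^esub> u_var [^]\<^bsub>ZSU\<^esub> (2::nat)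
             \<oplus>\<^bsub>ZSU\<^esub> s_var \<otimes>\<^bsub>ZSU\<^esub> u_var [^]\<^bsub>ZSU\<^esub> (2::nat))
        \<oplus>\<^bsub>ZSU\<^esub> s_var [^]\<^bsub>ZSU\<^esub> (2::nat),
       u_var [^]\<^bsub>ZSU\<^esub> (6::nat) }"

definition J2 :: "(nat \<Rightarrow> nat \<Rightarrow> int) set" where
  "J2 = genideal ZSU
     { s_var [^]\<^bsub>ZSU\<^esub> (2::nat) \<oplus>\<^bsub>ZSU\<^esub> s_var \<otimes>\<^bsub>ZSU\<^esub> u_var [^]\<^bsub>ZSU\<^esub> (2::nat)
        \<oplus>\<^bsub>ZSU\<^esub> u_var [^]\<^bsub>ZSU\<^esub> (4::nat),
       u_var [^]\<^bsub>ZSU\<^esub> (6::nat) }"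

end

theory Submission
  imports Defs
begin

lemma INTEG_simps[simp]: "\<zero>\<^bsub>INTEG\<^esub> = 0" "\<one>\<^bsub>INTEG\<^esub> = 1"
  "x \<oplus>\<^bsub>INTEG\<^esub> y = x + y"  "carrier INTEG = UNIV"
  by (simp_all add: INTEG_def)

lemma INTEG_ainv[simp]: "\<ominus>\<^bsub>INTEG\<^esub> x = - x"
proof -
  have "x \<oplus>\<^bsub>INTEG\<^esub> \<ominus>\<^bsub>INTEG\<^esub> x = \<zero>\<^bsub>INTEG\<^esub>" by (rule INTEG.R.r_neg) simp
  thus ?thesis by simp
qed

lemma INTEG_finsum_zero:
  assumes "\<And>x. x \<in> A \<Longrightarrow> f x = 0" shows "finsum INTEG f A = 0"
proof -
  have "finsum INTEG f A = finsum INTEG (\<lambda>x. \<zero>\<^bsub>INTEG\<^esub>) A"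
    by (rule INTEG.R.finsum_cong') (auto simp: assms)
  also have "\<dots> = \<zero>\<^bsub>INTEG\<^esub>" by (rule INTEG.R.finsum_zero)
  finally show ?thesis by simp
qed

lemma Zs_cring: "cring Zs" using UP_cring.UP_cring INTEG_cring unfolding UP_cring_def by blast
lemma ZSU_cring: "cring ZSU" using UP_cring.UP_cring Zs_cring unfolding UP_cring_def by blast


interpretation B: UP_cring Zs ZSU
  by (simp add: UP_cring_def Zs_cring)


lemma hom_closed[simp]: "homogeneous d p \<Longrightarrow> p \<in> carrier ZSU"
  by (simp add: homogeneous_def)

lemma hom_zero: "homogeneous d \<zero>\<^bsub>ZSU\<^esub>"
  by (simp add: homogeneous_def)

lemma hom_add: "homogeneous d p \<Longrightarrow> homogeneous d q \<Longrightarrow> homogeneous d (p \<oplus>\<^bsub>ZSU\<^esub> q)"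
  unfolding homogeneous_def by (auto, metis add.left_neutral add.right_neutral)

lemma hom_neg: "homogeneous d p \<Longrightarrow> homogeneous d (\<ominus>\<^bsub>ZSU\<^esub> p)"
  unfolding homogeneous_def by auto

lemma hom_finsum: "finite A \<Longrightarrow> (\<And>x. x \<in> A \<Longrightarrow> homogeneous d (f x)) \<Longrightarrow> homogeneous d (finsum ZSU f A)"
proof (induction A rule: finite_induct)
  case empty then show ?case by (simp add: hom_zero)
next
  case (insert x F)
  have "f \<in> F \<rightarrow> carrier ZSU" "f x \<in> carrier ZSU" using insert.prems hom_closed by blast+
  then have "finsum ZSU f (insert x F) = f x \<oplus>\<^bsub>ZSU\<^esub> finsum ZSU f F"
    using insert.hyps by (simp add: B.P.finsum_insert)
  then show ?case using insert by (simp add: hom_add)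
qed

lemma hom_mult: assumes p: "homogeneous a p" and q: "homogeneous b q"
  shows "homogeneous (a + b) (p \<otimes>\<^bsub>ZSU\<^esub> q)"
  unfolding homogeneous_def
proof (intro conjI allI impI)
  have pc: "p \<in> carrier ZSU" and qc: "q \<in> carrier ZSU" using p q by auto
  then show "p \<otimes>\<^bsub>ZSU\<^esub> q \<in> carrier ZSU" by simp
  fix i j
  assume nz: "coeff Zs (coeff ZSU (p \<otimes>\<^bsub>ZSU\<^esub> q) j) i \<noteq> 0"
  show "4 * i + 2 * j = a + b"
  proof (rule ccontr)
    assume ne: "4 * i + 2 * j \<noteq> a + b"
    have "coeff Zs (coeff ZSU (p \<otimes>\<^bsub>ZSU\<^esub> q) j) i
      = coeff Zs (\<Oplus>\<^bsub>Zs\<^esub>k \<in> {..j}. coeff ZSU p k \<otimes>\<^bsub>Zs\<^esub> coeff ZSU q (j-k)) i"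
      using pc qc by simp
    also have "\<dots> = (\<Oplus>\<^bsub>INTEG\<^esub>k \<in> {..j}. coeff Zs (coeff ZSU p k \<otimes>\<^bsub>Zs\<^esub> coeff ZSU q (j-k)) i)"
      using pc qc by (simp add: INTEG.coeff_finsum Pi_def del: INTEG.coeff_mult)
    also have "\<dots> = 0"
    proof (rule INTEG_finsum_zero)
      fix k assume k: "k \<in> {..j}"
      have "coeff Zs (coeff ZSU p k \<otimes>\<^bsub>Zs\<^esub> coeff ZSU q (j-k)) i
        = (\<Oplus>\<^bsub>INTEG\<^esub>l \<in> {..i}. coeff Zs (coeff ZSU p k) l \<otimes>\<^bsub>INTEG\<^esub> coeff Zs (coeff ZSU q (j-k)) (i-l))"
        using pc qc by simp
      also have "\<dots> = 0"
      proof (rule INTEG_finsum_zero)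
        fix l assume l: "l \<in> {..i}"
        show "coeff Zs (coeff ZSU p k) l \<otimes>\<^bsub>INTEG\<^esub> coeff Zs (coeff ZSU q (j-k)) (i-l) = 0"
        proof (cases "coeff Zs (coeff ZSU p k) l = 0 \<or> coeff Zs (coeff ZSU q (j-k)) (i-l) = 0")
          case True then show ?thesis by auto
        next
          case False
          then have "4 * l + 2 * k = a" "4 * (i-l) + 2 * (j-k) = b"
            using p q unfolding homogeneous_def by auto
          then show ?thesis using k l ne by auto
        qed
      qed
      finally show "coeff Zs (coeff ZSU p k \<otimes>\<^bsub>Zs\<^esub> coeff ZSU q (j-k)) i = 0" .
    qed
    finally show False using nz by simp
  qed
qed

lemma hom_pow: "homogeneous d p \<Longrightarrow> homogeneous (d * n) (p [^]\<^bsub>ZSU\<^esub> n)"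
proof (induction n)
  case 0
  then show ?case by (simp add: homogeneous_def)
next
  case (Suc n)
  then have "homogeneous (d * n + d) (p [^]\<^bsub>ZSU\<^esub> n \<otimes>\<^bsub>ZSU\<^esub> p)" by (intro hom_mult) auto
  then show ?case by (simp add: add.commute)
qed


definition cZ :: "int \<Rightarrow> nat \<Rightarrow> nat \<Rightarrow> int" where
  "cZ n = monom ZSU (monom Zs n 0) 0"
definition psi :: "(nat \<Rightarrow> nat \<Rightarrow> int) \<Rightarrow> (nat \<Rightarrow> int) \<Rightarrow> nat \<Rightarrow> nat \<Rightarrow> int" where
  "psi \<sigma> = eval INTEG ZSU cZ \<sigma>"
definition phi :: "(nat \<Rightarrow> nat \<Rightarrow> int) \<Rightarrow> (nat \<Rightarrow> nat \<Rightarrow> int) \<Rightarrow> nat \<Rightarrow> nat \<Rightarrow> int" where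
  "phi \<sigma> = eval Zs ZSU (psi \<sigma>) u_var"

lemma ZSU_ring: "ring ZSU" using ZSU_cring cring.axioms(1) by blast
lemma Zs_ring: "ring Zs" using Zs_cring cring.axioms(1) by blast

lemma cZ_hom: "cZ \<in> ring_hom INTEG ZSU"
proof -
  have "(\<lambda>a. monom ZSU a 0) \<circ> (\<lambda>a. monom Zs a 0) \<in> ring_hom INTEG ZSU"
    by (rule ring_hom_trans[OF INTEG.const_ring_hom B.const_ring_hom])
  then show ?thesis unfolding cZ_def[abs_def] by (simp add: comp_def)
qed

lemma cZ_carrier[simp]: "cZ n \<in> carrier ZSU" by (simp add: cZ_def)
lemma s_carrier[simp]: "s_var \<in> carrier ZSU" by (simp add: s_var_def)
lemma u_carrier[simp]: "u_var \<in> carrier ZSU" by (simp add: u_var_def)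

lemma cZ_one[simp]: "cZ 1 = \<one>\<^bsub>ZSU\<^esub>"
  using ring_hom_one[OF cZ_hom] by simp
lemma cZ_zero[simp]: "cZ 0 = \<zero>\<^bsub>ZSU\<^esub>"
  using ring_hom_zero[OF cZ_hom cring.axioms(1)[OF INTEG_cring] ZSU_ring] by simp

lemma pre1: "UP_pre_univ_prop INTEG ZSU cZ"
  by (rule UP_pre_univ_propI[OF INTEG_cring ZSU_cring cZ_hom])

lemma psi_hom: "\<sigma> \<in> carrier ZSU \<Longrightarrow> psi \<sigma> \<in> ring_hom Zs ZSU"
  unfolding psi_def by (rule UP_pre_univ_prop.eval_ring_hom[OF pre1])

lemma pre2: "\<sigma> \<in> carrier ZSU \<Longrightarrow> UP_pre_univ_prop Zs ZSU (psi \<sigma>)"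
  by (rule UP_pre_univ_propI[OF Zs_cring ZSU_cring psi_hom])

lemma phi_hom: "\<sigma> \<in> carrier ZSU \<Longrightarrow> phi \<sigma> \<in> ring_hom ZSU ZSU"
  unfolding phi_def by (rule UP_pre_univ_prop.eval_ring_hom[OF pre2]) simp_all

lemma phi_rh: "\<sigma> \<in> carrier ZSU \<Longrightarrow> ring_hom_cring ZSU ZSU (phi \<sigma>)"
  by (rule ring_hom_cringI[OF ZSU_cring ZSU_cring phi_hom])

lemma psi_monom: "\<sigma> \<in> carrier ZSU \<Longrightarrow> psi \<sigma> (monom Zs n i) = cZ n \<otimes>\<^bsub>ZSU\<^esub> \<sigma> [^]\<^bsub>ZSU\<^esub> i"
  unfolding psi_def by (rule UP_pre_univ_prop.eval_monom[OF pre1]) simp_all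

lemma phi_monom: "\<sigma> \<in> carrier ZSU \<Longrightarrow> a \<in> carrier Zs \<Longrightarrow>
   phi \<sigma> (monom ZSU a j) = psi \<sigma> a \<otimes>\<^bsub>ZSU\<^esub> u_var [^]\<^bsub>ZSU\<^esub> j"
  unfolding phi_def by (rule UP_pre_univ_prop.eval_monom[OF pre2]) simp_all

lemma phi_s: "\<sigma> \<in> carrier ZSU \<Longrightarrow> phi \<sigma> s_var = \<sigma>"
  unfolding s_var_def by (simp add: phi_monom psi_monom)

lemma phi_u: "\<sigma> \<in> carrier ZSU \<Longrightarrow> phi \<sigma> u_var = u_var"
proof -
  assume s: "\<sigma> \<in> carrier ZSU"
  have "phi \<sigma> u_var = psi \<sigma> \<one>\<^bsub>Zs\<^esub> \<otimes>\<^bsub>ZSU\<^esub> u_var [^]\<^bsub>ZSU\<^esub> (1::nat)"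
    using phi_monom[OF s, of "\<one>\<^bsub>Zs\<^esub>" 1, folded u_var_def] by simp
  then show ?thesis using ring_hom_one[OF psi_hom[OF s]] by simp
qed

lemma phi_cZ: "\<sigma> \<in> carrier ZSU \<Longrightarrow> phi \<sigma> (cZ n) = cZ n"
proof -
  assume s: "\<sigma> \<in> carrier ZSU"
  have "phi \<sigma> (cZ n) = psi \<sigma> (monom Zs n 0) \<otimes>\<^bsub>ZSU\<^esub> u_var [^]\<^bsub>ZSU\<^esub> (0::nat)"
    unfolding cZ_def by (rule phi_monom[OF s]) simp
  also have "\<dots> = cZ n" using psi_monom[OF s, of n 0] by simp
  finally show ?thesis .
qed

lemma ident:
  assumes F: "F \<in> ring_hom ZSU ZSU" and Fs: "F s_var = s_var" and Fu: "F u_var = u_var"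
    and Fc: "\<And>n. F (cZ n) = cZ n" and p: "p \<in> carrier ZSU"
  shows "F p = p"
proof -
  let ?E = "\<lambda>r. monom ZSU r 0"
  have Ehom: "?E \<in> ring_hom Zs ZSU" by (rule B.const_ring_hom)
  have FE: "F (?E r) = ?E r" if r: "r \<in> carrier Zs" for r
  proof -
    have h1: "ring_hom_cring Zs ZSU (F \<circ> ?E)"
      by (rule ring_hom_cringI[OF Zs_cring ZSU_cring ring_hom_trans[OF Ehom F]])
    have h2: "ring_hom_cring Zs ZSU ?E"
      by (rule ring_hom_cringI[OF Zs_cring ZSU_cring Ehom])
    have "(F \<circ> ?E) r = ?E r"
    proof (rule UP_pre_univ_prop.UP_hom_unique[OF pre1 h1 _ _ h2 _ _ r])
      show "(F \<circ> ?E) (monom Zs \<one>\<^bsub>INTEG\<^esub> (Suc 0)) = s_var" using Fs by (simp add: s_var_def)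
      show "?E (monom Zs \<one>\<^bsub>INTEG\<^esub> (Suc 0)) = s_var" by (simp add: s_var_def)
      show "(F \<circ> ?E) (monom Zs n 0) = cZ n" if "n \<in> carrier INTEG" for n
        using Fc[of n] by (simp add: cZ_def)
      show "?E (monom Zs n 0) = cZ n" if "n \<in> carrier INTEG" for n
        by (simp add: cZ_def)
    qed simp
    then show ?thesis by simp
  qed
  have h1: "ring_hom_cring ZSU ZSU F"
    by (rule ring_hom_cringI[OF ZSU_cring ZSU_cring F])
  have h2: "ring_hom_cring ZSU ZSU id"
    by (rule ring_hom_cringI[OF ZSU_cring ZSU_cring id_ring_hom])
  have pre3: "UP_pre_univ_prop Zs ZSU ?E"
    by (rule UP_pre_univ_propI[OF Zs_cring ZSU_cring Ehom])
  have "F p = id p"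
  proof (rule UP_pre_univ_prop.UP_hom_unique[OF pre3 h1 _ _ h2 _ _ p])
    show "F (monom ZSU \<one>\<^bsub>Zs\<^esub> (Suc 0)) = u_var" using Fu by (simp add: u_var_def)
    show "id (monom ZSU \<one>\<^bsub>Zs\<^esub> (Suc 0)) = u_var" by (simp add: u_var_def)
    show "F (?E r) = ?E r" if "r \<in> carrier Zs" for r using FE that .
  qed simp_all
  then show ?thesis by simp
qed


lemma hom_s: "homogeneous 4 s_var"
  by (simp add: homogeneous_def s_var_def)
lemma hom_u: "homogeneous 2 u_var"
  by (simp add: homogeneous_def u_var_def)
lemma hom_cZ: "homogeneous 0 (cZ n)"
  by (simp add: homogeneous_def cZ_def)

lemma hom_mult': "homogeneous a p \<Longrightarrow> homogeneous b q \<Longrightarrow> c = a + b \<Longrightarrow> homogeneous c (p \<otimes>\<^bsub>ZSU\<^esub> q)"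
  using hom_mult by blast

lemma phi_pres:
  assumes hs: "homogeneous 4 \<sigma>" and hp: "homogeneous d p"
  shows "homogeneous d (phi \<sigma> p)"
proof -
  have sc: "\<sigma> \<in> carrier ZSU" and pc: "p \<in> carrier ZSU" using hs hp by auto
  have eq1: "phi \<sigma> p = (\<Oplus>\<^bsub>ZSU\<^esub>j \<in> {..deg Zs p}. psi \<sigma> (coeff ZSU p j) \<otimes>\<^bsub>ZSU\<^esub> u_var [^]\<^bsub>ZSU\<^esub> j)"
    unfolding phi_def by (rule B.eval_on_carrier[OF pc])
  have tj: "homogeneous d (psi \<sigma> (coeff ZSU p j) \<otimes>\<^bsub>ZSU\<^esub> u_var [^]\<^bsub>ZSU\<^esub> j)" for j
  proof -
    let ?q = "coeff ZSU p j"
    have qc: "?q \<in> carrier Zs" using pc by simp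
    have eq: "psi \<sigma> ?q = (\<Oplus>\<^bsub>ZSU\<^esub>i \<in> {..deg INTEG ?q}. cZ (coeff Zs ?q i) \<otimes>\<^bsub>ZSU\<^esub> \<sigma> [^]\<^bsub>ZSU\<^esub> i)"
      unfolding psi_def by (rule INTEG.eval_on_carrier[OF qc])
    have eq2: "psi \<sigma> ?q \<otimes>\<^bsub>ZSU\<^esub> u_var [^]\<^bsub>ZSU\<^esub> j
       = (\<Oplus>\<^bsub>ZSU\<^esub>i \<in> {..deg INTEG ?q}. cZ (coeff Zs ?q i) \<otimes>\<^bsub>ZSU\<^esub> \<sigma> [^]\<^bsub>ZSU\<^esub> i \<otimes>\<^bsub>ZSU\<^esub> u_var [^]\<^bsub>ZSU\<^esub> j)"
      unfolding eq by (rule B.P.finsum_ldistr) (auto intro!: B.P.m_closed B.P.nat_pow_closed sc)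
    have t: "homogeneous d (cZ (coeff Zs ?q i) \<otimes>\<^bsub>ZSU\<^esub> \<sigma> [^]\<^bsub>ZSU\<^esub> i \<otimes>\<^bsub>ZSU\<^esub> u_var [^]\<^bsub>ZSU\<^esub> j)" for i
    proof (cases "coeff Zs ?q i = 0")
      case True
      have "cZ (coeff Zs ?q i) \<otimes>\<^bsub>ZSU\<^esub> \<sigma> [^]\<^bsub>ZSU\<^esub> i \<otimes>\<^bsub>ZSU\<^esub> u_var [^]\<^bsub>ZSU\<^esub> j = \<zero>\<^bsub>ZSU\<^esub>"
        unfolding True cZ_zero using sc by (simp only: B.P.l_null B.P.nat_pow_closed B.P.m_closed u_carrier)
      then show ?thesis by (simp only: hom_zero)
    next
      case False
      then have dd: "4 * i + 2 * j = d" using hp unfolding homogeneous_def by blast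
      have "homogeneous (0 + 4 * i + 2 * j) (cZ (coeff Zs ?q i) \<otimes>\<^bsub>ZSU\<^esub> \<sigma> [^]\<^bsub>ZSU\<^esub> i \<otimes>\<^bsub>ZSU\<^esub> u_var [^]\<^bsub>ZSU\<^esub> j)"
        by (rule hom_mult[OF hom_mult[OF hom_cZ hom_pow[OF hs]] hom_pow[OF hom_u]])
      then show ?thesis by (simp only: add_0 dd)
    qed
    show ?thesis unfolding eq2 by (rule hom_finsum) (simp_all only: finite_atMost t)
  qed
  show ?thesis unfolding eq1 by (rule hom_finsum) (simp_all only: finite_atMost tj)
qed


lemma (in monoid) p2: "x \<in> carrier G \<Longrightarrow> x [^] (2::nat) = x \<otimes> x" by (simp add: numeral_eq_Suc)
lemma (in monoid) p4: "x \<in> carrier G \<Longrightarrow> x [^] (4::nat) = x \<otimes> x \<otimes> x \<otimes> x" by (simp add: numeral_eq_Suc)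

lemma (in cring) idA: "s \<in> carrier R \<Longrightarrow> w \<in> carrier R \<Longrightarrow> (s \<ominus> w) \<oplus> w = s"
  by (simp add: a_minus_def a_assoc l_neg)
lemma (in cring) idB: "s \<in> carrier R \<Longrightarrow> w \<in> carrier R \<Longrightarrow> (s \<oplus> w) \<ominus> w = s"
  by (simp add: a_minus_def a_assoc r_neg)
lemma (in cring) idC0: "s \<in> carrier R \<Longrightarrow> w \<in> carrier R \<Longrightarrow>
   (w \<otimes> w \<oplus> w \<otimes> w \<oplus> w \<otimes> w)
        \<oplus> \<ominus> ((s \<oplus> (w \<oplus> w)) \<otimes> w \<oplus> (s \<oplus> (w \<oplus> w)) \<otimes> w
             \<oplus> (s \<oplus> (w \<oplus> w)) \<otimes> w)
        \<oplus> (s \<oplus> (w \<oplus> w)) \<otimes> (s \<oplus> (w \<oplus> w))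
  = s \<otimes> s \<oplus> s \<otimes> w \<oplus> w \<otimes> w"
  by algebra
lemma (in cring) idC: "s \<in> carrier R \<Longrightarrow> u \<in> carrier R \<Longrightarrow>
   (u [^] (4::nat) \<oplus> u [^] (4::nat) \<oplus> u [^] (4::nat))
        \<ominus> ((s \<oplus> (u [^] (2::nat) \<oplus> u [^] (2::nat))) \<otimes> u [^] (2::nat) \<oplus> (s \<oplus> (u [^] (2::nat) \<oplus> u [^] (2::nat))) \<otimes> u [^] (2::nat)
             \<oplus> (s \<oplus> (u [^] (2::nat) \<oplus> u [^] (2::nat))) \<otimes> u [^] (2::nat))
        \<oplus> (s \<oplus> (u [^] (2::nat) \<oplus> u [^] (2::nat))) [^] (2::nat)
  = s [^] (2::nat) \<oplus> s \<otimes> u [^] (2::nat) \<oplus> u [^] (4::nat)"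
proof -
  assume s: "s \<in> carrier R" and u: "u \<in> carrier R"
  have u4: "u [^] (4::nat) = u [^] (2::nat) \<otimes> u [^] (2::nat)"
    using u by (simp add: nat_pow_mult)
  have w: "u [^] (2::nat) \<in> carrier R" using u by simp
  show ?thesis unfolding u4 a_minus_def p2[OF s] p2[OF a_closed[OF s a_closed[OF w w]]]
    by (rule idC0[OF s w])
qed

definition "w0 = u_var [^]\<^bsub>ZSU\<^esub> (2::nat) \<oplus>\<^bsub>ZSU\<^esub> u_var [^]\<^bsub>ZSU\<^esub> (2::nat)"
definition "\<sigma>0 = s_var \<oplus>\<^bsub>ZSU\<^esub> w0"
definition "\<tau>0 = s_var \<ominus>\<^bsub>ZSU\<^esub> w0"

lemma w0_carrier[simp]: "w0 \<in> carrier ZSU" by (simp add: w0_def)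
lemma \<sigma>0_carrier[simp]: "\<sigma>0 \<in> carrier ZSU" by (simp add: \<sigma>0_def)
lemma \<tau>0_carrier[simp]: "\<tau>0 \<in> carrier ZSU" by (simp add: \<tau>0_def)

lemma hom_w0: "homogeneous 4 w0"
  unfolding w0_def using hom_add[OF hom_pow[OF hom_u, of 2] hom_pow[OF hom_u, of 2]] by simp
lemma hom_\<sigma>0: "homogeneous 4 \<sigma>0"
  unfolding \<sigma>0_def by (rule hom_add[OF hom_s hom_w0])
lemma hom_\<tau>0: "homogeneous 4 \<tau>0"
  unfolding \<tau>0_def a_minus_def by (rule hom_add[OF hom_s hom_neg[OF hom_w0]])

lemma phi_add: "\<sigma> \<in> carrier ZSU \<Longrightarrow> x \<in> carrier ZSU \<Longrightarrow> y \<in> carrier ZSU \<Longrightarrow> phi \<sigma> (x \<oplus>\<^bsub>ZSU\<^esub> y) = phi \<sigma> x \<oplus>\<^bsub>ZSU\<^esub> phi \<sigma> y"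
  by (rule ring_hom_add[OF phi_hom])
lemma phi_mult: "\<sigma> \<in> carrier ZSU \<Longrightarrow> x \<in> carrier ZSU \<Longrightarrow> y \<in> carrier ZSU \<Longrightarrow> phi \<sigma> (x \<otimes>\<^bsub>ZSU\<^esub> y) = phi \<sigma> x \<otimes>\<^bsub>ZSU\<^esub> phi \<sigma> y"
  by (rule ring_hom_mult[OF phi_hom])
lemma phi_pow: "\<sigma> \<in> carrier ZSU \<Longrightarrow> x \<in> carrier ZSU \<Longrightarrow> phi \<sigma> (x [^]\<^bsub>ZSU\<^esub> (n::nat)) = phi \<sigma> x [^]\<^bsub>ZSU\<^esub> n"
  by (rule ring_hom_cring.hom_pow[OF phi_rh])
lemma phi_neg: "\<sigma> \<in> carrier ZSU \<Longrightarrow> x \<in> carrier ZSU \<Longrightarrow> phi \<sigma> (\<ominus>\<^bsub>ZSU\<^esub> x) = \<ominus>\<^bsub>ZSU\<^esub> phi \<sigma> x"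
  by (rule ring_hom_cring.hom_a_inv[OF phi_rh])
lemma phi_minus: "\<sigma> \<in> carrier ZSU \<Longrightarrow> x \<in> carrier ZSU \<Longrightarrow> y \<in> carrier ZSU \<Longrightarrow> phi \<sigma> (x \<ominus>\<^bsub>ZSU\<^esub> y) = phi \<sigma> x \<ominus>\<^bsub>ZSU\<^esub> phi \<sigma> y"
  by (simp add: a_minus_def phi_add phi_neg)

lemma phi_w0: "\<sigma> \<in> carrier ZSU \<Longrightarrow> phi \<sigma> w0 = w0"
  unfolding w0_def by (simp add: phi_add phi_pow phi_u)

lemma phi_\<tau>\<sigma>: "phi \<tau>0 \<sigma>0 = s_var"
proof -
  have "phi \<tau>0 \<sigma>0 = \<tau>0 \<oplus>\<^bsub>ZSU\<^esub> w0" unfolding \<sigma>0_def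
    by (simp add: phi_add phi_w0 phi_s)
  then show ?thesis unfolding \<tau>0_def w0_def using cring.idA[OF ZSU_cring] by simp
qed

lemma phi_\<sigma>\<tau>: "phi \<sigma>0 \<tau>0 = s_var"
proof -
  have "phi \<sigma>0 \<tau>0 = \<sigma>0 \<ominus>\<^bsub>ZSU\<^esub> w0" unfolding \<tau>0_def
    by (simp add: phi_minus phi_w0 phi_s)
  then show ?thesis unfolding \<sigma>0_def w0_def using cring.idB[OF ZSU_cring] by simp
qed

lemma comp_id:
  assumes a: "\<alpha> \<in> carrier ZSU" and b: "\<beta> \<in> carrier ZSU" and ab: "phi \<alpha> \<beta> = s_var"
    and p: "p \<in> carrier ZSU"
  shows "phi \<alpha> (phi \<beta> p) = p"
proof -
  have "(phi \<alpha> \<circ> phi \<beta>) p = p"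
  proof (rule ident[OF ring_hom_trans[OF phi_hom[OF b] phi_hom[OF a]] _ _ _ p])
    show "(phi \<alpha> \<circ> phi \<beta>) s_var = s_var" using ab by (simp add: phi_s b)
    show "(phi \<alpha> \<circ> phi \<beta>) u_var = u_var" by (simp add: phi_u a b)
    show "(phi \<alpha> \<circ> phi \<beta>) (cZ n) = cZ n" for n by (simp add: phi_cZ a b)
  qed
  then show ?thesis by simp
qed

lemma inv1: "p \<in> carrier ZSU \<Longrightarrow> phi \<tau>0 (phi \<sigma>0 p) = p"
  by (rule comp_id[OF \<tau>0_carrier \<sigma>0_carrier phi_\<tau>\<sigma>])
lemma inv2: "p \<in> carrier ZSU \<Longrightarrow> phi \<sigma>0 (phi \<tau>0 p) = p"
  by (rule comp_id[OF \<sigma>0_carrier \<tau>0_carrier phi_\<sigma>\<tau>])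


definition "fI = (u_var [^]\<^bsub>ZSU\<^esub> (4::nat) \<oplus>\<^bsub>ZSU\<^esub> u_var [^]\<^bsub>ZSU\<^esub> (4::nat) \<oplus>\<^bsub>ZSU\<^esub> u_var [^]\<^bsub>ZSU\<^esub> (4::nat))
        \<ominus>\<^bsub>ZSU\<^esub> (s_var \<otimes>\<^bsub>ZSU\<^esub> u_var [^]\<^bsub>ZSU\<^esub> (2::nat) \<oplus>\<^bsub>ZSU\<^esub> s_var \<otimes>\<^bsub>ZSU\<^esub> u_var [^]\<^bsub>ZSU\<^esub> (2::nat)
             \<oplus>\<^bsub>ZSU\<^esub> s_var \<otimes>\<^bsub>ZSU\<^esub> u_var [^]\<^bsub>ZSU\<^esub> (2::nat))
        \<oplus>\<^bsub>ZSU\<^esub> s_var [^]\<^bsub>ZSU\<^esub> (2::nat)"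
definition "fJ = s_var [^]\<^bsub>ZSU\<^esub> (2::nat) \<oplus>\<^bsub>ZSU\<^esub> s_var \<otimes>\<^bsub>ZSU\<^esub> u_var [^]\<^bsub>ZSU\<^esub> (2::nat)
        \<oplus>\<^bsub>ZSU\<^esub> u_var [^]\<^bsub>ZSU\<^esub> (4::nat)"
definition "u6 = u_var [^]\<^bsub>ZSU\<^esub> (6::nat)"

lemma I2_eq: "I2 = genideal ZSU {fI, u6}" by (simp add: I2_def fI_def u6_def)
lemma J2_eq: "J2 = genideal ZSU {fJ, u6}" by (simp add: J2_def fJ_def u6_def)

lemma fI_carrier[simp]: "fI \<in> carrier ZSU" by (simp add: fI_def)
lemma fJ_carrier[simp]: "fJ \<in> carrier ZSU" by (simp add: fJ_def)
lemma u6_carrier[simp]: "u6 \<in> carrier ZSU" by (simp add: u6_def)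

lemma phi_fI: "phi \<sigma>0 fI = fJ"
proof -
  have "phi \<sigma>0 fI = (u_var [^]\<^bsub>ZSU\<^esub> (4::nat) \<oplus>\<^bsub>ZSU\<^esub> u_var [^]\<^bsub>ZSU\<^esub> (4::nat) \<oplus>\<^bsub>ZSU\<^esub> u_var [^]\<^bsub>ZSU\<^esub> (4::nat))
        \<ominus>\<^bsub>ZSU\<^esub> (\<sigma>0 \<otimes>\<^bsub>ZSU\<^esub> u_var [^]\<^bsub>ZSU\<^esub> (2::nat) \<oplus>\<^bsub>ZSU\<^esub> \<sigma>0 \<otimes>\<^bsub>ZSU\<^esub> u_var [^]\<^bsub>ZSU\<^esub> (2::nat)
             \<oplus>\<^bsub>ZSU\<^esub> \<sigma>0 \<otimes>\<^bsub>ZSU\<^esub> u_var [^]\<^bsub>ZSU\<^esub> (2::nat))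
        \<oplus>\<^bsub>ZSU\<^esub> \<sigma>0 [^]\<^bsub>ZSU\<^esub> (2::nat)"
    unfolding fI_def by (simp add: phi_add phi_minus phi_mult phi_pow phi_s phi_u)
  also have "\<dots> = fJ" unfolding fJ_def \<sigma>0_def w0_def
    by (rule cring.idC[OF ZSU_cring s_carrier u_carrier])
  finally show ?thesis .
qed

lemma phi_u6: "\<sigma> \<in> carrier ZSU \<Longrightarrow> phi \<sigma> u6 = u6"
  unfolding u6_def by (simp add: phi_pow phi_u)

lemma phi_fJ: "phi \<tau>0 fJ = fI"
  using inv1[OF fI_carrier] by (simp add: phi_fI)

lemma I2_ideal: "ideal I2 ZSU" unfolding I2_eq by (rule B.P.genideal_ideal) auto
lemma J2_ideal: "ideal J2 ZSU" unfolding J2_eq by (rule B.P.genideal_ideal) auto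

lemma phi_rhr: "\<sigma> \<in> carrier ZSU \<Longrightarrow> ring_hom_ring ZSU ZSU (phi \<sigma>)"
  by (rule ring_hom_ringI2[OF ZSU_ring ZSU_ring phi_hom])

lemma I2_sub: "I2 \<subseteq> {p \<in> carrier ZSU. phi \<sigma>0 p \<in> J2}"
  unfolding I2_eq
proof (rule B.P.genideal_minimal)
  show "ideal {p \<in> carrier ZSU. phi \<sigma>0 p \<in> J2} ZSU"
    by (rule ring_hom_ring.ideal_vimage[OF phi_rhr[OF \<sigma>0_carrier] J2_ideal])
  have "fJ \<in> J2" "u6 \<in> J2" unfolding J2_eq by (auto intro: B.P.genideal_self[THEN subsetD])
  then show "{fI, u6} \<subseteq> {p \<in> carrier ZSU. phi \<sigma>0 p \<in> J2}"
    by (simp add: phi_fI phi_u6)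
qed

lemma J2_sub: "J2 \<subseteq> {p \<in> carrier ZSU. phi \<tau>0 p \<in> I2}"
  unfolding J2_eq
proof (rule B.P.genideal_minimal)
  show "ideal {p \<in> carrier ZSU. phi \<tau>0 p \<in> I2} ZSU"
    by (rule ring_hom_ring.ideal_vimage[OF phi_rhr[OF \<tau>0_carrier] I2_ideal])
  have "fI \<in> I2" "u6 \<in> I2" unfolding I2_eq by (auto intro: B.P.genideal_self[THEN subsetD])
  then show "{fJ, u6} \<subseteq> {p \<in> carrier ZSU. phi \<tau>0 p \<in> I2}"
    by (simp add: phi_fJ phi_u6)
qed

lemma I2_char: "p \<in> carrier ZSU \<Longrightarrow> p \<in> I2 \<longleftrightarrow> phi \<sigma>0 p \<in> J2"
proof
  assume "p \<in> I2" then show "phi \<sigma>0 p \<in> J2" using I2_sub by blast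
next
  assume p: "p \<in> carrier ZSU" and "phi \<sigma>0 p \<in> J2"
  then have "phi \<tau>0 (phi \<sigma>0 p) \<in> I2" using J2_sub by blast
  then show "p \<in> I2" using inv1[OF p] by simp
qed


definition "iota = (a_r_coset ZSU J2) \<circ> phi \<sigma>0"

lemma iota_hom: "iota \<in> ring_hom ZSU (ZSU Quot J2)"
  unfolding iota_def by (rule ring_hom_trans[OF phi_hom[OF \<sigma>0_carrier] ideal.rcos_ring_hom[OF J2_ideal]])

lemma iota_rhr: "ring_hom_ring ZSU (ZSU Quot J2) iota"
  by (rule ring_hom_ringI2[OF ZSU_ring ideal.quotient_is_ring[OF J2_ideal] iota_hom])

lemma coset_zero_iff: "x \<in> carrier ZSU \<Longrightarrow> J2 +>\<^bsub>ZSU\<^esub> x = J2 \<longleftrightarrow> x \<in> J2"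
proof -
  interpret J: ideal J2 ZSU by (rule J2_ideal)
  assume x: "x \<in> carrier ZSU"
  show ?thesis
  proof
    assume "J2 +>\<^bsub>ZSU\<^esub> x = J2" then show "x \<in> J2" using J.a_rcos_self[OF x] by simp
  next
    assume "x \<in> J2" then show "J2 +>\<^bsub>ZSU\<^esub> x = J2" by (rule J.a_rcos_const)
  qed
qed

lemma kernel_eq: "a_kernel ZSU (ZSU Quot J2) iota = I2"
proof -
  have "a_kernel ZSU (ZSU Quot J2) iota = {x \<in> carrier ZSU. iota x = J2}"
    by (simp add: a_kernel_def' FactRing_def)
  also have "\<dots> = {x \<in> carrier ZSU. phi \<sigma>0 x \<in> J2}"
    using coset_zero_iff ring_hom_closed[OF phi_hom[OF \<sigma>0_carrier]] by (auto simp: iota_def)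
  also have "\<dots> = I2"
    using I2_char ideal.axioms(1)[OF I2_ideal] additive_subgroup.a_subset by blast
  finally show ?thesis .
qed

lemma iota_surj: "iota ` carrier ZSU = carrier (ZSU Quot J2)"
proof
  show "iota ` carrier ZSU \<subseteq> carrier (ZSU Quot J2)"
    using ring_hom_closed[OF iota_hom] by blast
  show "carrier (ZSU Quot J2) \<subseteq> iota ` carrier ZSU"
  proof
    fix X assume "X \<in> carrier (ZSU Quot J2)"
    then obtain q where q: "q \<in> carrier ZSU" "X = J2 +>\<^bsub>ZSU\<^esub> q"
      unfolding FactRing_def A_RCOSETS_def' by auto
    then have "X = iota (phi \<tau>0 q)" by (simp add: iota_def inv2)
    moreover have "phi \<tau>0 q \<in> carrier ZSU" using ring_hom_closed[OF phi_hom[OF \<tau>0_carrier] q(1)] .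
    ultimately show "X \<in> iota ` carrier ZSU" by blast
  qed
qed

lemma phi_grade: "phi \<sigma>0 ` {p. homogeneous d p} = {p. homogeneous d p}"
proof
  show "phi \<sigma>0 ` {p. homogeneous d p} \<subseteq> {p. homogeneous d p}"
    using phi_pres[OF hom_\<sigma>0] by blast
  show "{p. homogeneous d p} \<subseteq> phi \<sigma>0 ` {p. homogeneous d p}"
  proof
    fix q assume "q \<in> {p. homogeneous d p}"
    then have hq: "homogeneous d q" by simp
    then have "q = phi \<sigma>0 (phi \<tau>0 q)" using inv2 by simp
    moreover have "homogeneous d (phi \<tau>0 q)" by (rule phi_pres[OF hom_\<tau>0 hq])
    ultimately show "q \<in> phi \<sigma>0 ` {p. homogeneous d p}" by blast
  qed
qed

theorem proposition5p4:
  shows "graded_quot_iso I2 J2"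
  unfolding graded_quot_iso_def
proof
  let ?H = "\<lambda>X. the_elem (iota ` X)"
  have iso: "?H \<in> ring_iso (ZSU Quot (a_kernel ZSU (ZSU Quot J2) iota)) (ZSU Quot J2)"
    by (rule ring_hom_ring.FactRing_iso_set[OF iota_rhr iota_surj])
  then show "?H \<in> ring_iso (ZSU Quot I2) (ZSU Quot J2)" by (simp add: kernel_eq)
  have Hval: "?H (I2 +>\<^bsub>ZSU\<^esub> p) = J2 +>\<^bsub>ZSU\<^esub> phi \<sigma>0 p" if p: "p \<in> carrier ZSU" for p
    using ring_hom_ring.the_elem_simp[OF iota_rhr p] unfolding kernel_eq by (simp add: iota_def)
  show "\<forall>d. ?H ` quot_grade I2 d = quot_grade J2 d"
  proof
    fix d
    have "?H ` quot_grade I2 d = (\<lambda>p. J2 +>\<^bsub>ZSU\<^esub> phi \<sigma>0 p) ` {p. homogeneous d p}"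
      unfolding quot_grade_def image_image using Hval by (auto intro!: image_cong)
    also have "\<dots> = (\<lambda>q. J2 +>\<^bsub>ZSU\<^esub> q) ` (phi \<sigma>0 ` {p. homogeneous d p})"
      by (simp add: image_image)
    also have "\<dots> = quot_grade J2 d" unfolding phi_grade quot_grade_def ..
    finally show "?H ` quot_grade I2 d = quot_grade J2 d" .
  qed
qed

end
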